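(* Let $s$ be a Sturmian word and let $w$ be a non-empty factor of $s$. If $w$ is right special, then $r_s(w)$ equals the first letter of $w$. If $w$ is left special, then $r_s(w)$ equals the last letter of $w$.
   Context: A Sturmian word is an infinite word $s\in\{a,b\}^{\omega}$ that is aperiodic (not ultimately periodic) and balanced: for all factors $u,v$ of $s$ with $|u|=|v|$ one has $||u|_x-|v|_x|\le 1$ for $x\in\{a,b\}$, where $|u|_x$ is the number of occurrences of the letter $x$ in $u$. $\mathcal F^+ s$ denotes the set of non-empty factors of $s$. A non-empty factor $w$ of $s$ is rich in the letter $z\in\{a,b\}$ if there is a factor $v$ of $s$ with $|v|=|w|$ and $|w|_z>|v|_z$; every non-empty factor of a Sturmian word is rich in exactly one of the letters $a,b$, and $r_s:\mathcal F^+ s\to\{a,b\}$ maps $w$ to the letter in which $w$ is rich. A factor $u$ is right special (resp. left special) if there are distinct letters $x,y$ with $ux,uy$ (resp. $xu,yu$) factors of $s$. *)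

theory Defs
  imports Main
begin

datatype letter = a | b

type_synonym word = "nat \<Rightarrow> letter"

definition factors :: "word \<Rightarrow> letter list set" where
  "factors s = {w. \<exists>i. w = map s [i..<i + length w]}"

definition factors_ne :: "word \<Rightarrow> letter list set" where
  "factors_ne s = {w \<in> factors s. w \<noteq> []}"

definition count_letter :: "letter list \<Rightarrow> letter \<Rightarrow> nat" where
  "count_letter u x = length (filter (\<lambda>y. y = x) u)"

definition ultimately_periodic :: "word \<Rightarrow> bool" where
  "ultimately_periodic s \<longleftrightarrow> (\<exists>p>0. \<exists>n0. \<forall>n\<ge>n0. s (n + p) = s n)"

definition balanced :: "word \<Rightarrow> bool" where
  "balanced s \<longleftrightarrow> (\<forall>u\<in>factors s. \<forall>v\<in>factors s. length u = length v \<longrightarrow>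
     (\<forall>x. \<bar>int (count_letter u x) - int (count_letter v x)\<bar> \<le> 1))"

definition sturmian :: "word \<Rightarrow> bool" where
  "sturmian s \<longleftrightarrow> \<not> ultimately_periodic s \<and> balanced s"

definition rich_in :: "word \<Rightarrow> letter list \<Rightarrow> letter \<Rightarrow> bool" where
  "rich_in s w z \<longleftrightarrow> w \<in> factors_ne s \<and>
     (\<exists>v\<in>factors s. length v = length w \<and> count_letter w z > count_letter v z)"

text \<open>The letter in which a non-empty factor is rich (unique for Sturmian words).\<close>
definition r :: "word \<Rightarrow> letter list \<Rightarrow> letter" where
  "r s w = (THE z. rich_in s w z)"

definition right_special :: "word \<Rightarrow> letter list \<Rightarrow> bool" where
  "right_special s u \<longleftrightarrow> (\<exists>x y. x \<noteq> y \<and> u @ [x] \<in> factors s \<and> u @ [y] \<in> factors s)"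

definition left_special :: "word \<Rightarrow> letter list \<Rightarrow> bool" where
  "left_special s u \<longleftrightarrow> (\<exists>x y. x \<noteq> y \<and> x # u \<in> factors s \<and> y # u \<in> factors s)"

end

theory Submission
  imports Defs
begin

lemma factor_append:
  assumes "u @ v \<in> factors s"
  shows "u \<in> factors s \<and> v \<in> factors s"
proof -
  obtain i where i: "u @ v = map s [i..<i + length (u @ v)]"
    using assms unfolding factors_def by blast
  have "[i..<i + length (u @ v)] = [i..<i + length u] @ [i + length u..<i + length u + length v]"
    using upt_add_eq_append[of i "i + length u" "length v"] by (simp add: add.assoc)
  then have "u @ v = map s [i..<i + length u] @ map s [i + length u..<i + length u + length v]"
    using i by simp
  then have "u = map s [i..<i + length u] \<and> v = map s [i + length u..<i + length u + length v]"
    by (subst (asm) append_eq_append_conv) auto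
  then show ?thesis unfolding factors_def by (metis (mono_tags, lifting) mem_Collect_eq add.assoc length_map length_upt diff_add_inverse)
qed

lemma count_append: "count_letter (u @ v) z = count_letter u z + count_letter v z"
  by (simp add: count_letter_def)

lemma count_cons: "count_letter (x # u) z = (if x = z then 1 else 0) + count_letter u z"
  by (simp add: count_letter_def)

lemma count_sum: "count_letter u a + count_letter u b = length u"
proof (induction u)
  case (Cons x u) then show ?case by (cases x) (auto simp: count_letter_def)
qed (simp add: count_letter_def)

lemma other: "x \<noteq> z \<Longrightarrow> count_letter u x + count_letter u z = length u"
  using count_sum[of u] by (cases x; cases z) auto

lemma rich_unique:
  assumes bal: "balanced s" and r1: "rich_in s w z" and r2: "rich_in s w y"
  shows "y = z"
proof (rule ccontr)
  assume ne: "y \<noteq> z"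
  obtain v1 where v1: "v1 \<in> factors s" "length v1 = length w" "count_letter w z > count_letter v1 z"
    using r1 unfolding rich_in_def by blast
  obtain v2 where v2: "v2 \<in> factors s" "length v2 = length w" "count_letter w y > count_letter v2 y"
    using r2 unfolding rich_in_def by blast
  have "count_letter v2 z > count_letter w z"
    using other[OF ne, of v2] other[OF ne, of w] v2 by linarith
  then have "count_letter v2 z \<ge> count_letter v1 z + 2" using v1 by linarith
  moreover have "\<bar>int (count_letter v2 z) - int (count_letter v1 z)\<bar> \<le> 1"
    using bal v1 v2 unfolding balanced_def by auto
  ultimately show False by linarith
qed

lemma r_eq: "balanced s \<Longrightarrow> rich_in s w z \<Longrightarrow> r s w = z"
  unfolding r_def using rich_unique by blast

lemma other_letter: "\<exists>d. d \<noteq> (c::letter)"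
  by (cases c) auto

theorem mainTheorem1:
  fixes s :: word and w :: "letter list"
  assumes "sturmian s" and "w \<in> factors_ne s"
  shows "(right_special s w \<longrightarrow> r s w = hd w) \<and> (left_special s w \<longrightarrow> r s w = last w)"
proof -
  have bal: "balanced s" using assms(1) unfolding sturmian_def by simp
  have wne: "w \<noteq> []" using assms(2) unfolding factors_ne_def by simp
  show ?thesis
  proof (intro conjI impI)
    assume "right_special s w"
    then obtain x y where xy: "x \<noteq> y" "w @ [x] \<in> factors s" "w @ [y] \<in> factors s"
      unfolding right_special_def by blast
    obtain c w' where w: "w = c # w'" using wne by (cases w) auto
    obtain d where "d \<in> {x, y}" "d \<noteq> c" using xy(1) by blast
    then have df: "w' @ [d] \<in> factors s" using xy w factor_append[of "[c]" "w' @ [d]" s] by auto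
    have "rich_in s w c" unfolding rich_in_def
      using assms(2) df \<open>d \<noteq> c\<close> by (auto simp: w count_cons count_append count_letter_def intro!: bexI[of _ "w' @ [d]"])
    then show "r s w = hd w" using r_eq[OF bal] w by simp
  next
    assume "left_special s w"
    then obtain x y where xy: "x \<noteq> y" "x # w \<in> factors s" "y # w \<in> factors s"
      unfolding left_special_def by blast
    obtain c w' where w: "w = w' @ [c]" using wne by (cases w rule: rev_cases) auto
    obtain d where "d \<in> {x, y}" "d \<noteq> c" using xy(1) by blast
    then have df: "d # w' \<in> factors s" using xy w factor_append[of "d # w'" "[c]" s] by auto
    have "rich_in s w c" unfolding rich_in_def
      using assms(2) df \<open>d \<noteq> c\<close> by (auto simp: w count_cons count_append count_letter_def intro!: bexI[of _ "d # w'"])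
    then show "r s w = last w" using r_eq[OF bal] w by simp
  qed
qed

end
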